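(* Let $\mathcal A_+,\mathcal A_-\subseteq\mathbb R^n$ be disjoint finite sets with $\mathcal A=\mathcal A_+\cup\mathcal A_-$ full dimensional. Let $\Lambda=\{\Delta_1,\dots,\Delta_r\}$ be full-dimensional simplices with vertices in $\mathcal A_+$ such that $\mathcal A_-\subseteq\Delta_j$ for all $j\in[r]$, and let $\Gamma_j$ be the smallest face of $\Delta_j$ containing $\mathcal A_-$. Let $f\in\mathcal S(\mathcal A_+,\mathcal A_-)$ have nonsigned coefficients $c\in\mathbb R^{\mathcal A}_{>0}$ and suppose $\mathbb 1\in\operatorname{Sing}_{>0}(f)$. Let $\mathcal Z=\mathcal Z(\Lambda,c)$. Then: (i) $\mathcal Z\subseteq\{\delta\in\mathbb R^r:\sum_{i=1}^r\delta_i=1\}$. (ii) If $\delta\in\mathcal Z\cap\mathbb R^r_{\ge0}$ and $J=\{j\in[r]:\delta_j>0\}$, then for each $j\in J$ the signomial $$q_j=\sum_{a\in\operatorname{vertices}(\Gamma_j)}\delta_j\Big(\sum_{b\in\mathcal A_-}\lambda^b_{a,j}c_b\Big)x^a-\sum_{b\in\mathcal A_-}\delta_jc_bx^b$$ has signed support $(\operatorname{vertices}(\Gamma_j),\mathcal A_-)$, which is an extended circuit, and satisfies $\mathbb 1\in\operatorname{Sing}_{>0}(q_j)$; moreover $f=\sum_{j\in J}q_j$, and $f$ is SONC.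
   Context: A signomial with signed support $(\mathcal A_+,\mathcal A_-)$ is $f(x)=\sum_{a\in\mathcal A_+}c_ax^a-\sum_{b\in\mathcal A_-}c_bx^b$ on $\mathbb R^n_{>0}$ with all $c_a,c_b>0$ (nonsigned coefficients); $\mathcal S(\mathcal A_+,\mathcal A_-)$ is the set of these. Full dimensional: $\dim\operatorname{conv}(\mathcal A)=n$. $\operatorname{Sing}_{>0}(f)$ is the set of $x\in\mathbb R^n_{>0}$ with $f(x)=x_1\partial_{x_1}f(x)=\dots=x_n\partial_{x_n}f(x)=0$; $\mathbb 1=(1,\dots,1)$. $\lambda^b_{a,k}\in[0,1]$ ($a\in\operatorname{vertices}(\Delta_k)$) are the barycentric coordinates of $b$ w.r.t. the vertices of $\Delta_k$, i.e. $b=\sum_a\lambda^b_{a,k}a$, $\sum_a\lambda^b_{a,k}=1$. $\mathcal Z(\Lambda,c)\subseteq\mathbb R^r$ is the solution set of the linear system in $\delta_1,\dots,\delta_r$: $c_a=\sum_{k:\,a\in\operatorname{vertices}(\Delta_k)}\delta_k\big(\sum_{b\in\mathcal A_-}\lambda^b_{a,k}c_b\big)$ for all $a\in\mathcal A_+$. $(\mathcal B_+,\mathcal B_-)$ is an extended circuit if $\#(\mathcal B_+\cup\mathcal B_-)=\#\mathcal B_+=1$ or $\operatorname{conv}(\mathcal B_+\cup\mathcal B_-)$ is a simplex with vertex set $\mathcal B_+$; a circuit if moreover (in the second case) $\#\mathcal B_-=1$ and $\mathcal B_-\subseteq\operatorname{relint}\operatorname{conv}(\mathcal B_+)$. A signomial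 is SONC if it is a finite sum of copositive signomials whose signed supports are circuits. *)

theory Defs
  imports "HOL-Analysis.Analysis"
begin

definition pos_orthant :: "(real^'n) set" where
  "pos_orthant = {x. \<forall>i. 0 < x $ i}"

definition xpow :: "real^'n \<Rightarrow> real^'n \<Rightarrow> real" where
  "xpow x a = (\<Prod>i\<in>UNIV. (x $ i) powr (a $ i))"

definition signomial :: "(real^'n) set \<Rightarrow> (real^'n) set \<Rightarrow> (real^'n \<Rightarrow> real) \<Rightarrow> real^'n \<Rightarrow> real" where
  "signomial P M c x = (\<Sum>a\<in>P. c a * xpow x a) - (\<Sum>b\<in>M. c b * xpow x b)"

definition sig_set :: "(real^'n) set \<Rightarrow> (real^'n) set \<Rightarrow> (real^'n \<Rightarrow> real) set" where
  "sig_set P M = {f. finite P \<and> finite M \<and> P \<inter> M = {} \<and>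
     (\<exists>c. (\<forall>a\<in>P \<union> M. 0 < c a) \<and> (\<forall>x\<in>pos_orthant. f x = signomial P M c x))}"

definition sing_pos :: "(real^'n \<Rightarrow> real) \<Rightarrow> (real^'n) set" where
  "sing_pos f = {x\<in>pos_orthant. f x = 0 \<and>
     (\<forall>i. \<exists>D. ((\<lambda>t. f (\<chi> j. if j = i then t else x $ j)) has_real_derivative D) (at (x $ i))
              \<and> x $ i * D = 0)}"

definition vertices :: "(real^'n) set \<Rightarrow> (real^'n) set" where
  "vertices S = {v. v extreme_point_of S}"

definition smallest_face :: "(real^'n) set \<Rightarrow> (real^'n) set \<Rightarrow> (real^'n) set" where
  "smallest_face S A = \<Inter>{F. F face_of S \<and> A \<subseteq> F}"

text \<open>Barycentric coordinate of b with respect to vertex a of the affinely independent set V.\<close>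
definition bary :: "(real^'n) set \<Rightarrow> real^'n \<Rightarrow> real^'n \<Rightarrow> real" where
  "bary V b a = (THE l. (\<forall>v. v \<notin> V \<longrightarrow> l v = 0) \<and> sum l V = 1 \<and> (\<Sum>v\<in>V. l v *\<^sub>R v) = b) a"

text \<open>Z(Lambda,c) in R^r, vectors represented as functions on {1..r} (zero outside).\<close>
definition Zset :: "nat \<Rightarrow> (nat \<Rightarrow> (real^'n) set) \<Rightarrow> (real^'n) set \<Rightarrow> (real^'n) set
    \<Rightarrow> (real^'n \<Rightarrow> real) \<Rightarrow> (nat \<Rightarrow> real) set" where
  "Zset r D Ap Am c = {\<delta>. (\<forall>k. k \<notin> {1..r} \<longrightarrow> \<delta> k = 0) \<and>
     (\<forall>a\<in>Ap. c a = (\<Sum>k\<in>{k\<in>{1..r}. a \<in> vertices (D k)}.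
                       \<delta> k * (\<Sum>b\<in>Am. bary (vertices (D k)) b a * c b)))}"

definition ext_circuit :: "(real^'n) set \<Rightarrow> (real^'n) set \<Rightarrow> bool" where
  "ext_circuit P M \<longleftrightarrow>
     (card (P \<union> M) = 1 \<and> card P = 1) \<or>
     ((\<exists>d\<ge>0. d simplex (convex hull (P \<union> M))) \<and> vertices (convex hull (P \<union> M)) = P)"

definition circuit :: "(real^'n) set \<Rightarrow> (real^'n) set \<Rightarrow> bool" where
  "circuit P M \<longleftrightarrow>
     (card (P \<union> M) = 1 \<and> card P = 1) \<or>
     ((\<exists>d\<ge>0. d simplex (convex hull (P \<union> M))) \<and> vertices (convex hull (P \<union> M)) = P
       \<and> card M = 1 \<and> M \<subseteq> rel_interior (convex hull P))"

definition sonc :: "(real^'n \<Rightarrow> real) \<Rightarrow> bool" where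
  "sonc f \<longleftrightarrow> (\<exists>(m::nat) P M g. (\<forall>i<m. circuit (P i) (M i) \<and> g i \<in> sig_set (P i) (M i)
        \<and> (\<forall>x\<in>pos_orthant. 0 \<le> g i x))
      \<and> (\<forall>x\<in>pos_orthant. f x = (\<Sum>i<m. g i x)))"

end

theory Submission imports Defs begin

lemma bary_unique:
  fixes C :: "(real^'n) set"
  assumes ind: "\<not> affine_dependent C"
    and l0: "\<forall>v. v \<notin> C \<longrightarrow> l v = 0" and l1: "sum l C = 1" and l2: "(\<Sum>v\<in>C. l v *\<^sub>R v) = b"
  shows "bary C b = l"
proof -
  have finC: "finite C" using aff_independent_finite ind by blast
  have uniq: "l' = l" if h: "(\<forall>v. v \<notin> C \<longrightarrow> l' v = 0) \<and> sum l' C = 1 \<and> (\<Sum>v\<in>C. l' v *\<^sub>R v) = b" for l'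
  proof (rule ccontr)
    assume ne: "l' \<noteq> l"
    then obtain v where v: "l' v \<noteq> l v" by blast
    have vC: "v \<in> C" using h l0 v by metis
    let ?U = "\<lambda>v. l' v - l v"
    have "sum ?U C = 0" using h l1 by (simp add: sum_subtractf)
    moreover have "(\<Sum>v\<in>C. ?U v *\<^sub>R v) = 0" using h l2 by (simp add: scaleR_diff_left sum_subtractf)
    moreover have "\<exists>v\<in>C. ?U v \<noteq> 0" using v vC by auto
    ultimately have "affine_dependent C" using affine_dependent_explicit_finite[OF finC] by blast
    with ind show False by blast
  qed
  have ex: "(\<forall>v. v \<notin> C \<longrightarrow> l v = 0) \<and> sum l C = 1 \<and> (\<Sum>v\<in>C. l v *\<^sub>R v) = b"
    using l0 l1 l2 by blast
  have "(THE l. (\<forall>v. v \<notin> C \<longrightarrow> l v = 0) \<and> sum l C = 1 \<and> (\<Sum>v\<in>C. l v *\<^sub>R v) = b) = l"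
    apply (rule the_equality) using ex uniq by blast+
  then show ?thesis unfolding bary_def by (simp add: fun_eq_iff)
qed

lemma bary_face:
  fixes C S :: "(real^'n) set"
  assumes ind: "\<not> affine_dependent C" and SC: "S \<subseteq> C" and b: "b \<in> convex hull S"
  shows "\<And>v. v \<notin> S \<Longrightarrow> bary C b v = 0" "\<And>v. 0 \<le> bary C b v"
    "sum (bary C b) S = 1" "(\<Sum>v\<in>S. bary C b v *\<^sub>R v) = b"
    "sum (bary C b) C = 1" "(\<Sum>v\<in>C. bary C b v *\<^sub>R v) = b"
proof -
  have finC: "finite C" using aff_independent_finite ind by blast
  have finS: "finite S" using finC SC finite_subset by blast
  obtain u where u: "\<forall>x\<in>S. 0 \<le> u x" "sum u S = 1" "(\<Sum>x\<in>S. u x *\<^sub>R x) = b"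
    using b convex_hull_finite[OF finS] by blast
  define l where "l v = (if v \<in> S then u v else 0)" for v
  have lS: "sum l S = 1" using u unfolding l_def by simp
  have lS2: "(\<Sum>v\<in>S. l v *\<^sub>R v) = b" using u unfolding l_def by simp
  have lC: "sum l C = sum l S"
    by (rule sum.mono_neutral_right[OF finC SC]) (auto simp: l_def)
  have lC2: "(\<Sum>v\<in>C. l v *\<^sub>R v) = (\<Sum>v\<in>S. l v *\<^sub>R v)"
    by (rule sum.mono_neutral_right[OF finC SC]) (auto simp: l_def)
  have "bary C b = l"
    by (rule bary_unique[OF ind]) (use SC lS lS2 lC lC2 in \<open>auto simp: l_def\<close>)
  then show "\<And>v. v \<notin> S \<Longrightarrow> bary C b v = 0" "\<And>v. 0 \<le> bary C b v"
    "sum (bary C b) S = 1" "(\<Sum>v\<in>S. bary C b v *\<^sub>R v) = b"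
    "sum (bary C b) C = 1" "(\<Sum>v\<in>C. bary C b v *\<^sub>R v) = b"
    using lS lS2 lC lC2 u by (auto simp: l_def)
qed

lemma simplex_vertices:
  fixes S :: "(real^'n) set"
  assumes "d simplex S"
  shows "\<not> affine_dependent (vertices S) \<and> S = convex hull (vertices S) \<and> finite (vertices S)
     \<and> int (card (vertices S)) = d + 1"
proof -
  obtain C where C: "finite C" "\<not> affine_dependent C" "int (card C) = d + 1" "S = convex hull C"
    using assms unfolding simplex by blast
  have "vertices S = C" unfolding vertices_def C(4)
    using extreme_point_of_convex_hull_affine_independent[OF C(2)] by auto
  then show ?thesis using C by auto
qed

lemma xpow_line: "xpow (\<chi> k. if k = i then t else 1) a = t powr (a $ i)"
proof -
  have "xpow (\<chi> k. if k = i then t else 1) a = (\<Prod>k\<in>UNIV. if k = i then t powr (a $ i) else 1)"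
    unfolding xpow_def by (rule prod.cong) auto
  also have "\<dots> = t powr (a $ i)" by (simp add: prod.delta)
  finally show ?thesis .
qed

lemma xpow_one: "xpow (\<chi> k. 1) a = 1"
  unfolding xpow_def by simp

lemma one_pos: "(\<chi> k. (1::real)) \<in> pos_orthant"
  unfolding pos_orthant_def by simp

lemma sing_crit:
  fixes P M :: "(real^'n) set"
  assumes fP: "finite P" and fM: "finite M"
    and h: "\<And>x. h x = (\<Sum>a\<in>P. \<alpha> a * xpow x a) - (\<Sum>b\<in>M. \<beta> b * xpow x b)"
    and e0: "(\<Sum>a\<in>P. \<alpha> a) - (\<Sum>b\<in>M. \<beta> b) = 0"
    and e1: "(\<Sum>a\<in>P. \<alpha> a *\<^sub>R a) - (\<Sum>b\<in>M. \<beta> b *\<^sub>R b) = 0"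
  shows "(\<chi> k. 1) \<in> sing_pos h"
  unfolding sing_pos_def
proof (intro CollectI conjI allI one_pos)
  show "h (\<chi> k. 1) = 0" using e0 by (simp add: h xpow_one)
  fix i
  have eq: "(\<lambda>t. h (\<chi> j. if j = i then t else (\<chi> k. (1::real)) $ j)) =
     (\<lambda>t. (\<Sum>a\<in>P. \<alpha> a * t powr (a $ i)) - (\<Sum>b\<in>M. \<beta> b * t powr (b $ i)))"
  proof
    fix t
    have "(\<chi> j. if j = i then t else (\<chi> k. (1::real)) $ j) = (\<chi> j. if j = i then t else 1)"
      by (simp add: vec_eq_iff)
    then show "h (\<chi> j. if j = i then t else (\<chi> k. (1::real)) $ j) =
     (\<Sum>a\<in>P. \<alpha> a * t powr (a $ i)) - (\<Sum>b\<in>M. \<beta> b * t powr (b $ i))"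
      by (simp add: h xpow_line)
  qed
  have dp: "((\<lambda>t. t powr (a $ i)) has_real_derivative a $ i) (at 1)" for a :: "real^'n"
    using has_real_derivative_powr[of 1 "a $ i"] by simp
  have "((\<lambda>t. (\<Sum>a\<in>P. \<alpha> a * t powr (a $ i)) - (\<Sum>b\<in>M. \<beta> b * t powr (b $ i)))
      has_real_derivative (\<Sum>a\<in>P. \<alpha> a * a $ i) - (\<Sum>b\<in>M. \<beta> b * b $ i)) (at 1)"
    by (intro DERIV_diff DERIV_sum DERIV_cmult dp)
  moreover have "(\<Sum>a\<in>P. \<alpha> a * a $ i) - (\<Sum>b\<in>M. \<beta> b * b $ i) = 0"
    using arg_cong[OF e1, of "\<lambda>v. v $ i"] by simp
  ultimately show "\<exists>D. ((\<lambda>t. h (\<chi> j. if j = i then t else (\<chi> k. (1::real)) $ j)) has_real_derivative D)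
       (at ((\<chi> k. (1::real)) $ i)) \<and> (\<chi> k. (1::real)) $ i * D = 0"
    unfolding eq by auto
qed

lemma smallest_face_simplex:
  fixes C M :: "(real^'n) set"
  assumes ind: "\<not> affine_dependent C" and MC: "M \<subseteq> convex hull C"
  shows "vertices (smallest_face (convex hull C) M) \<subseteq> C \<and>
     smallest_face (convex hull C) M = convex hull (vertices (smallest_face (convex hull C) M)) \<and>
     M \<subseteq> smallest_face (convex hull C) M \<and>
     (\<forall>a\<in>vertices (smallest_face (convex hull C) M). \<exists>b\<in>M. 0 < bary C b a)"
proof -
  define G where "G = smallest_face (convex hull C) M"
  have Gface: "G face_of convex hull C"
    unfolding G_def smallest_face_def
    apply (rule face_of_Inter)
    using MC face_of_refl[OF convex_convex_hull[of C]] by blast+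
  obtain S where S: "S \<subseteq> C" "G = convex hull S"
    using face_of_convex_hull_affine_independent[OF ind, THEN iffD1, OF Gface] by blast
  have indS: "\<not> affine_dependent S" using ind S(1) affine_independent_subset by blast
  have vS: "vertices G = S" unfolding vertices_def S(2)
    using extreme_point_of_convex_hull_affine_independent[OF indS] by auto
  have MG: "M \<subseteq> G" unfolding G_def smallest_face_def by blast
  have finS: "finite S" using indS aff_independent_finite by blast
  have pos: "\<exists>b\<in>M. 0 < bary C b a" if aS: "a \<in> S" for a
  proof (rule ccontr)
    assume "\<not> (\<exists>b\<in>M. 0 < bary C b a)"
    then have z: "\<forall>b\<in>M. bary C b a \<le> 0" by auto
    have Msub: "M \<subseteq> convex hull (S - {a})"
    proof
      fix b assume bM: "b \<in> M"
      then have bS: "b \<in> convex hull S" using MG S(2) by blast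
      note B = bary_face[OF ind S(1) bS]
      have za: "bary C b a = 0" using z bM B(2)[of a] by (meson order.antisym)
      have r1: "sum (bary C b) S = bary C b a + sum (bary C b) (S - {a})" by (rule sum.remove[OF finS aS])
      have r2: "(\<Sum>v\<in>S. bary C b v *\<^sub>R v) = bary C b a *\<^sub>R a + (\<Sum>v\<in>S - {a}. bary C b v *\<^sub>R v)"
        by (rule sum.remove[OF finS aS])
      have "sum (bary C b) (S - {a}) = 1"
      proof -
        have "sum (bary C b) (S - {a}) = sum (bary C b) S" by (simp only: r1 za add_0)
        then show ?thesis using B(3) by (rule trans)
      qed
      moreover have "(\<Sum>v\<in>S - {a}. bary C b v *\<^sub>R v) = b"
      proof -
        have e: "(\<Sum>v\<in>S. bary C b v *\<^sub>R v) = b" using B(4) by blast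
        have "(\<Sum>v\<in>S - {a}. bary C b v *\<^sub>R v) = (\<Sum>v\<in>S. bary C b v *\<^sub>R v)"
          by (simp only: r2 za add_0 scale_zero_left)
        then show ?thesis using e by (rule trans)
      qed
      moreover have "\<forall>v\<in>S - {a}. 0 \<le> bary C b v" using B(2) by blast
      ultimately show "b \<in> convex hull (S - {a})"
        unfolding convex_hull_finite[of "S - {a}", OF finite_Diff[OF finS]]
        by (intro CollectI exI[of _ "bary C b"] conjI)
    qed
    have "\<exists>c. c \<subseteq> C \<and> convex hull (S - {a}) = convex hull c"
      by (rule exI[of _ "S - {a}"]) (use S(1) in auto)
    then have fa: "convex hull (S - {a}) face_of convex hull C"
      by (rule face_of_convex_hull_affine_independent[OF ind, THEN iffD2])
    have "G \<subseteq> convex hull (S - {a})"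
      unfolding G_def smallest_face_def by (rule Inter_lower) (use Msub fa in simp)
    moreover have "a \<in> G" by (simp add: S(2) hull_inc aS)
    ultimately have "a \<in> affine hull (S - {a})"
      using convex_hull_subset_affine_hull[of "S - {a}"] by (meson subsetD)
    then have "affine_dependent S" unfolding affine_dependent_def using aS by (intro bexI)
    then show False using indS by blast
  qed
  show ?thesis unfolding G_def[symmetric] using vS S MG pos by simp
qed

lemma xpow_exp:
  assumes x: "x \<in> pos_orthant"
  shows "xpow x a = exp (\<Sum>i\<in>UNIV. a $ i * ln (x $ i))"
proof -
  have "xpow x a = (\<Prod>i\<in>UNIV. exp (a $ i * ln (x $ i)))"
    unfolding xpow_def
  proof (intro prod.cong refl)
    fix i
    have "0 < x $ i" using x unfolding pos_orthant_def by blast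
    then show "x $ i powr a $ i = exp (a $ i * ln (x $ i))" by (simp add: powr_def)
  qed
  then show ?thesis by (simp add: exp_sum)
qed

lemma amgm:
  fixes P :: "(real^'n) set"
  assumes fP: "finite P" and ne: "P \<noteq> {}" and l0: "\<And>a. a \<in> P \<Longrightarrow> 0 \<le> l a"
    and l1: "sum l P = 1" and l2: "(\<Sum>a\<in>P. l a *\<^sub>R a) = b" and x: "x \<in> pos_orthant"
  shows "xpow x b \<le> (\<Sum>a\<in>P. l a * xpow x a)"
proof -
  define L where "L a = (\<Sum>i\<in>UNIV. a $ i * ln (x $ i))" for a :: "real^'n"
  have Lb: "L b = (\<Sum>a\<in>P. l a * L a)"
  proof -
    have "L b = (\<Sum>i\<in>UNIV. (\<Sum>a\<in>P. l a * a $ i) * ln (x $ i))"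
      unfolding L_def l2[symmetric] by simp
    also have "\<dots> = (\<Sum>i\<in>UNIV. \<Sum>a\<in>P. l a * (a $ i * ln (x $ i)))"
      by (simp add: sum_distrib_right mult.assoc)
    also have "\<dots> = (\<Sum>a\<in>P. \<Sum>i\<in>UNIV. l a * (a $ i * ln (x $ i)))"
      by (rule sum.swap)
    also have "\<dots> = (\<Sum>a\<in>P. l a * L a)"
      unfolding L_def by (simp add: sum_distrib_left)
    finally show ?thesis .
  qed
  have "exp (\<Sum>a\<in>P. l a *\<^sub>R L a) \<le> (\<Sum>a\<in>P. l a * exp (L a))"
    by (rule convex_on_sum[OF fP ne exp_convex l1 l0]) auto
  then show ?thesis
    using Lb by (simp add: xpow_exp[OF x] L_def[symmetric])
qed

lemma circuit_piece:
  fixes C :: "(real^'n) set"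
  assumes ind: "\<not> affine_dependent C" and bh: "b \<in> convex hull C" and bC: "b \<notin> C" and w: "0 < w"
  defines "P \<equiv> {a\<in>C. 0 < bary C b a}"
  shows "circuit P {b}"
    and "(\<lambda>x. w * ((\<Sum>a\<in>P. bary C b a * xpow x a) - xpow x b)) \<in> sig_set P {b}"
    and "\<forall>x\<in>pos_orthant. 0 \<le> w * ((\<Sum>a\<in>P. bary C b a * xpow x a) - xpow x b)"
    and "\<And>x. (\<Sum>a\<in>C. bary C b a * xpow x a) = (\<Sum>a\<in>P. bary C b a * xpow x a)"
    and "P \<subseteq> C"
proof -
  note B = bary_face[OF ind subset_refl bh]
  have finC: "finite C" using aff_independent_finite ind by blast
  have PC: "P \<subseteq> C" unfolding P_def by blast
  then show "P \<subseteq> C" .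
  have finP: "finite P" using finC PC finite_subset by blast
  have z: "bary C b a = 0" if "a \<in> C - P" for a
    using that B(2)[of a] unfolding P_def by force
  have sP: "sum (bary C b) P = 1"
    using B(5) sum.mono_neutral_right[OF finC PC, of "bary C b"] z by simp
  have cP: "(\<Sum>a\<in>P. bary C b a *\<^sub>R a) = b"
    using B(6) sum.mono_neutral_right[OF finC PC, of "\<lambda>a. bary C b a *\<^sub>R a"] z by simp
  show eqx: "(\<Sum>a\<in>C. bary C b a * xpow x a) = (\<Sum>a\<in>P. bary C b a * xpow x a)" for x :: "real^'n"
    using sum.mono_neutral_right[OF finC PC, of "\<lambda>a. bary C b a * xpow x a"] z by simp
  have Pne: "P \<noteq> {}" using sP by auto
  have indP: "\<not> affine_dependent P" using ind PC affine_independent_subset by blast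
  have posP: "\<forall>a\<in>P. 0 < bary C b a" unfolding P_def by blast
  have bP: "b \<in> convex hull P"
    unfolding convex_hull_finite[OF finP] using sP cP posP
    by (intro CollectI exI[of _ "bary C b"] conjI) (auto intro: less_imp_le)
  have hullPb: "convex hull (P \<union> {b}) = convex hull P"
    using hull_redundant[OF bP] by simp
  have cardP: "card P \<ge> 1" using Pne finP by (simp add: Suc_le_eq card_gt_0_iff)
  have smp: "(int (card P) - 1) simplex (convex hull P)"
    by (rule simplex_convex_hull) (use indP in simp)
  have vP: "vertices (convex hull P) = P" unfolding vertices_def
    using extreme_point_of_convex_hull_affine_independent[OF indP] by auto
  have ri: "b \<in> rel_interior (convex hull P)"
    unfolding rel_interior_convex_hull_explicit[OF indP] using sP cP posP
    by (intro CollectI exI[of _ "bary C b"] conjI) auto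
  show "circuit P {b}" unfolding circuit_def hullPb
    using smp vP ri cardP by (intro disjI2 conjI exI[of _ "int (card P) - 1"]) auto
  have bnP: "b \<notin> P" using bC PC by blast
  define cc where "cc a = (if a = b then w else w * bary C b a)" for a
  have ccpos: "\<forall>a\<in>P \<union> {b}. 0 < cc a" using posP w unfolding cc_def by auto
  have sig: "w * ((\<Sum>a\<in>P. bary C b a * xpow x a) - xpow x b) = signomial P {b} cc x" for x :: "real^'n"
  proof -
    have "(\<Sum>a\<in>P. cc a * xpow x a) = (\<Sum>a\<in>P. w * (bary C b a * xpow x a))"
      by (rule sum.cong) (use bnP in \<open>auto simp: cc_def\<close>)
    then show ?thesis unfolding signomial_def by (simp add: cc_def sum_distrib_left right_diff_distrib)
  qed
  show "(\<lambda>x. w * ((\<Sum>a\<in>P. bary C b a * xpow x a) - xpow x b)) \<in> sig_set P {b}"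
    unfolding sig_set_def using finP bnP ccpos sig by blast
  show "\<forall>x\<in>pos_orthant. 0 \<le> w * ((\<Sum>a\<in>P. bary C b a * xpow x a) - xpow x b)"
  proof
    fix x :: "real^'n" assume x: "x \<in> pos_orthant"
    have "xpow x b \<le> (\<Sum>a\<in>P. bary C b a * xpow x a)"
      by (rule amgm[OF finP Pne _ sP cP x]) (use posP in \<open>auto intro: less_imp_le\<close>)
    then show "0 \<le> w * ((\<Sum>a\<in>P. bary C b a * xpow x a) - xpow x b)" using w by simp
  qed
qed

lemma dsum_real:
  fixes L :: "'b \<Rightarrow> 'a \<Rightarrow> real"
  assumes "finite S" "finite M"
  shows "(\<Sum>a\<in>S. d * (\<Sum>b\<in>M. L b a * c b) * X a) = d * (\<Sum>b\<in>M. c b * (\<Sum>a\<in>S. L b a * X a))"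
proof -
  have "(\<Sum>a\<in>S. d * (\<Sum>b\<in>M. L b a * c b) * X a) = (\<Sum>a\<in>S. \<Sum>b\<in>M. d * (c b * (L b a * X a)))"
    by (simp add: sum_distrib_left sum_distrib_right mult_ac)
  also have "\<dots> = (\<Sum>b\<in>M. \<Sum>a\<in>S. d * (c b * (L b a * X a)))" by (rule sum.swap)
  also have "\<dots> = d * (\<Sum>b\<in>M. c b * (\<Sum>a\<in>S. L b a * X a))"
    by (simp add: sum_distrib_left)
  finally show ?thesis .
qed

lemma dsum_vec:
  fixes L :: "'b \<Rightarrow> 'a \<Rightarrow> real" and X :: "'a \<Rightarrow> 'v::real_vector"
  assumes "finite S" "finite M"
  shows "(\<Sum>a\<in>S. (d * (\<Sum>b\<in>M. L b a * c b)) *\<^sub>R X a) = d *\<^sub>R (\<Sum>b\<in>M. c b *\<^sub>R (\<Sum>a\<in>S. L b a *\<^sub>R X a))"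
proof -
  have "(\<Sum>a\<in>S. (d * (\<Sum>b\<in>M. L b a * c b)) *\<^sub>R X a) = (\<Sum>a\<in>S. \<Sum>b\<in>M. (d * (c b * L b a)) *\<^sub>R X a)"
    by (simp add: sum_distrib_left scaleR_sum_left mult_ac)
  also have "\<dots> = (\<Sum>b\<in>M. \<Sum>a\<in>S. (d * (c b * L b a)) *\<^sub>R X a)" by (rule sum.swap)
  also have "\<dots> = d *\<^sub>R (\<Sum>b\<in>M. c b *\<^sub>R (\<Sum>a\<in>S. L b a *\<^sub>R X a))"
    by (simp add: scaleR_sum_right)
  finally show ?thesis .
qed

theorem lemma3p12:
  fixes Ap Am :: "(real^'n) set" and D :: "nat \<Rightarrow> (real^'n) set" and r :: nat
    and c :: "real^'n \<Rightarrow> real" and f :: "real^'n \<Rightarrow> real"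
  assumes fin: "finite Ap" "finite Am" and disj: "Ap \<inter> Am = {}"
    and fulldim: "aff_dim (convex hull (Ap \<union> Am)) = int CARD('n)"
    and simp: "\<forall>k\<in>{1..r}. int CARD('n) simplex D k \<and> vertices (D k) \<subseteq> Ap \<and> Am \<subseteq> D k"
    and distinct: "inj_on D {1..r}"
    and cpos: "\<forall>a\<in>Ap \<union> Am. 0 < c a"
    and f: "\<forall>x\<in>pos_orthant. f x = signomial Ap Am c x"
    and sing: "(\<chi> i. 1) \<in> sing_pos f"
  shows "(\<forall>\<delta>\<in>Zset r D Ap Am c. (\<Sum>i=1..r. \<delta> i) = 1) \<and>
    (\<forall>\<delta>\<in>Zset r D Ap Am c. (\<forall>j\<in>{1..r}. 0 \<le> \<delta> j) \<longrightarrow>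
      (let J = {j\<in>{1..r}. 0 < \<delta> j};
           \<Gamma> = (\<lambda>j. smallest_face (D j) Am);
           q = (\<lambda>j x. (\<Sum>a\<in>vertices (\<Gamma> j). \<delta> j * (\<Sum>b\<in>Am. bary (vertices (D j)) b a * c b) * xpow x a)
                      - (\<Sum>b\<in>Am. \<delta> j * c b * xpow x b))
       in (\<forall>j\<in>J. q j \<in> sig_set (vertices (\<Gamma> j)) Am \<and> ext_circuit (vertices (\<Gamma> j)) Am
                  \<and> (\<chi> i. 1) \<in> sing_pos (q j))
          \<and> (\<forall>x\<in>pos_orthant. f x = (\<Sum>j\<in>J. q j x))
          \<and> sonc f))"
proof -
  define V where "V k = vertices (D k)" for k
  have Vk: "\<not> affine_dependent (V k) \<and> D k = convex hull (V k) \<and> finite (V k) \<and> V k \<subseteq> Ap \<and> Am \<subseteq> D k"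
    if "k \<in> {1..r}" for k
    using simplex_vertices[of "int CARD('n)" "D k"] simp that unfolding V_def by blast
  have one: "(\<chi> i. (1::real)) \<in> pos_orthant" by (rule one_pos)
  have f1: "f (\<chi> i. 1) = 0" using sing unfolding sing_pos_def by blast
  have sumeq: "(\<Sum>a\<in>Ap. c a) = (\<Sum>b\<in>Am. c b)"
  proof -
    have "f (\<chi> i. 1) = signomial Ap Am c (\<chi> i. 1)" using f one by blast
    then have "(\<Sum>a\<in>Ap. c a * xpow (\<chi> i. 1) a) - (\<Sum>b\<in>Am. c b * xpow (\<chi> i. 1) b) = 0"
      using f1 unfolding signomial_def by simp
    then show ?thesis by (simp add: xpow_one)
  qed
  have Amne: "Am \<noteq> {}"
  proof
    assume e: "Am = {}"
    have "Ap = {}"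
    proof (rule ccontr)
      assume "Ap \<noteq> {}"
      then have "0 < (\<Sum>a\<in>Ap. c a)" using fin cpos by (intro sum_pos) auto
      then show False using sumeq e by simp
    qed
    then show False using fulldim e by simp
  qed
  have sAm: "0 < (\<Sum>b\<in>Am. c b)" using Amne fin cpos by (intro sum_pos) auto
  have key: "(\<Sum>a\<in>Ap. c a * X a) = (\<Sum>k\<in>{1..r}. \<delta> k * (\<Sum>b\<in>Am. c b * (\<Sum>a\<in>V k. bary (V k) b a * X a)))"
    if dZ: "\<delta> \<in> Zset r D Ap Am c" for \<delta> X
  proof -
    have ca: "\<forall>a\<in>Ap. c a = (\<Sum>k\<in>{k\<in>{1..r}. a \<in> V k}. \<delta> k * (\<Sum>b\<in>Am. bary (V k) b a * c b))"
      using dZ unfolding Zset_def V_def by blast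
    have "(\<Sum>a\<in>Ap. c a * X a) = (\<Sum>a\<in>Ap. \<Sum>k\<in>{k\<in>{1..r}. a \<in> V k}. \<delta> k * (\<Sum>b\<in>Am. bary (V k) b a * c b) * X a)"
      by (rule sum.cong) (use ca in \<open>auto simp: sum_distrib_right\<close>)
    also have "\<dots> = (\<Sum>k\<in>{1..r}. \<Sum>a\<in>{a\<in>Ap. a \<in> V k}. \<delta> k * (\<Sum>b\<in>Am. bary (V k) b a * c b) * X a)"
      by (rule sum.swap_restrict) (use fin in auto)
    also have "\<dots> = (\<Sum>k\<in>{1..r}. \<Sum>a\<in>V k. \<delta> k * (\<Sum>b\<in>Am. bary (V k) b a * c b) * X a)"
    proof (rule sum.cong[OF refl])
      fix k assume "k \<in> {1..r}"
      then have "{a\<in>Ap. a \<in> V k} = V k" using Vk by blast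
      then show "(\<Sum>a\<in>{a\<in>Ap. a \<in> V k}. \<delta> k * (\<Sum>b\<in>Am. bary (V k) b a * c b) * X a)
          = (\<Sum>a\<in>V k. \<delta> k * (\<Sum>b\<in>Am. bary (V k) b a * c b) * X a)" by simp
    qed
    also have "\<dots> = (\<Sum>k\<in>{1..r}. \<delta> k * (\<Sum>b\<in>Am. c b * (\<Sum>a\<in>V k. bary (V k) b a * X a)))"
      by (rule sum.cong[OF refl]) (rule dsum_real, use Vk fin in auto)
    finally show ?thesis .
  qed
  have part1: "(\<Sum>i=1..r. \<delta> i) = 1" if dZ: "\<delta> \<in> Zset r D Ap Am c" for \<delta>
  proof -
    have "(\<Sum>a\<in>Ap. c a) = (\<Sum>k\<in>{1..r}. \<delta> k * (\<Sum>b\<in>Am. c b))"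
    proof -
      have "(\<Sum>a\<in>Ap. c a) = (\<Sum>a\<in>Ap. c a * 1)" by simp
      also have "\<dots> = (\<Sum>k\<in>{1..r}. \<delta> k * (\<Sum>b\<in>Am. c b * (\<Sum>a\<in>V k. bary (V k) b a * 1)))"
        by (rule key[OF dZ])
      also have "\<dots> = (\<Sum>k\<in>{1..r}. \<delta> k * (\<Sum>b\<in>Am. c b))"
      proof (rule sum.cong[OF refl])
        fix k assume k: "k \<in> {1..r}"
        have "(\<Sum>b\<in>Am. c b * (\<Sum>a\<in>V k. bary (V k) b a * 1)) = (\<Sum>b\<in>Am. c b)"
        proof (rule sum.cong[OF refl])
          fix b assume "b \<in> Am"
          then have "b \<in> convex hull (V k)" using Vk[OF k] by blast
          then show "c b * (\<Sum>a\<in>V k. bary (V k) b a * 1) = c b"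
            using bary_face(5)[OF conjunct1[OF Vk[OF k]] subset_refl] by simp
        qed
        then show "\<delta> k * (\<Sum>b\<in>Am. c b * (\<Sum>a\<in>V k. bary (V k) b a * 1)) = \<delta> k * (\<Sum>b\<in>Am. c b)" by simp
      qed
      finally show ?thesis .
    qed
    then have "(\<Sum>b\<in>Am. c b) = (\<Sum>k\<in>{1..r}. \<delta> k) * (\<Sum>b\<in>Am. c b)"
      using sumeq by (simp add: sum_distrib_right)
    then show ?thesis using sAm by simp
  qed
  show ?thesis
  proof (intro conjI ballI impI)
    fix \<delta> assume dZ: "\<delta> \<in> Zset r D Ap Am c"
    show "(\<Sum>i=1..r. \<delta> i) = 1" by (rule part1[OF dZ])
  next
    fix \<delta> assume dZ: "\<delta> \<in> Zset r D Ap Am c" and dnn: "\<forall>j\<in>{1..r}. 0 \<le> \<delta> j"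
    define J where "J = {j\<in>{1..r}. 0 < \<delta> j}"
    define \<Gamma> where "\<Gamma> = (\<lambda>j. smallest_face (D j) Am)"
    define q where "q = (\<lambda>j x. (\<Sum>a\<in>vertices (\<Gamma> j). \<delta> j * (\<Sum>b\<in>Am. bary (vertices (D j)) b a * c b) * xpow x a)
                      - (\<Sum>b\<in>Am. \<delta> j * c b * xpow x b))"
    define S where "S j = vertices (\<Gamma> j)" for j
    have q': "q j x = (\<Sum>a\<in>S j. \<delta> j * (\<Sum>b\<in>Am. bary (V j) b a * c b) * xpow x a)
                      - (\<Sum>b\<in>Am. \<delta> j * c b * xpow x b)" for j x
      unfolding q_def S_def V_def by simp
    have F1: "S j \<subseteq> V j \<and> \<Gamma> j = convex hull (S j) \<and> Am \<subseteq> \<Gamma> j \<and> (\<forall>a\<in>S j. \<exists>b\<in>Am. 0 < bary (V j) b a)"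
      if j: "j \<in> {1..r}" for j
    proof -
      have "D j = convex hull (V j)" "\<not> affine_dependent (V j)" "Am \<subseteq> convex hull (V j)" using Vk[OF j] by auto
      then show ?thesis unfolding S_def \<Gamma>_def using smallest_face_simplex[of "V j" Am] by metis
    qed
    have finS: "finite (S j)" if j: "j \<in> {1..r}" for j
      using F1[OF j] Vk[OF j] finite_subset by blast
    have F2: "(\<forall>v. v \<notin> S j \<longrightarrow> bary (V j) b v = 0) \<and> (\<forall>v. 0 \<le> bary (V j) b v) \<and>
        sum (bary (V j) b) (S j) = 1 \<and> (\<Sum>v\<in>S j. bary (V j) b v *\<^sub>R v) = b"
      if j: "j \<in> {1..r}" and b: "b \<in> Am" for j b
    proof -
      have "b \<in> convex hull (S j)" using F1[OF j] b by blast
      note B = bary_face[OF conjunct1[OF Vk[OF j]] conjunct1[OF F1[OF j]] this]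
      show ?thesis using B(1-4) by blast
    qed
    have qR: "q j x = \<delta> j * (\<Sum>b\<in>Am. c b * ((\<Sum>a\<in>V j. bary (V j) b a * xpow x a) - xpow x b))"
      if j: "j \<in> {1..r}" for j x
    proof -
      have "(\<Sum>a\<in>S j. \<delta> j * (\<Sum>b\<in>Am. bary (V j) b a * c b) * xpow x a)
          = \<delta> j * (\<Sum>b\<in>Am. c b * (\<Sum>a\<in>S j. bary (V j) b a * xpow x a))"
        by (rule dsum_real[OF finS[OF j] fin(2)])
      also have "\<dots> = \<delta> j * (\<Sum>b\<in>Am. c b * (\<Sum>a\<in>V j. bary (V j) b a * xpow x a))"
      proof -
        have "(\<Sum>a\<in>S j. bary (V j) b a * xpow x a) = (\<Sum>a\<in>V j. bary (V j) b a * xpow x a)" if b: "b \<in> Am" for b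
          by (rule sum.mono_neutral_left) (use Vk[OF j] F1[OF j] F2[OF j b] in auto)
        then show ?thesis by simp
      qed
      finally show ?thesis unfolding q' by (simp add: right_diff_distrib sum_subtractf sum_distrib_left mult_ac)
    qed
    have A: "\<forall>j\<in>J. q j \<in> sig_set (S j) Am \<and> ext_circuit (S j) Am \<and> (\<chi> i. 1) \<in> sing_pos (q j)"
    proof
      fix j assume jJ: "j \<in> J"
      then have j: "j \<in> {1..r}" and dj: "0 < \<delta> j" unfolding J_def by auto
      note F1j = F1[OF j]
      have SA: "S j \<inter> Am = {}" using F1j Vk[OF j] disj by blast
      define cc where "cc a = (if a \<in> Am then \<delta> j * c a else \<delta> j * (\<Sum>b\<in>Am. bary (V j) b a * c b))" for a
      have ccpos: "\<forall>a\<in>S j \<union> Am. 0 < cc a"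
      proof
        fix a assume a: "a \<in> S j \<union> Am"
        show "0 < cc a"
        proof (cases "a \<in> Am")
          case True then show ?thesis using dj cpos unfolding cc_def by auto
        next
          case False
          then have aS: "a \<in> S j" using a by blast
          then obtain b where b: "b \<in> Am" "0 < bary (V j) b a" using F1j by blast
          have "0 < (\<Sum>b\<in>Am. bary (V j) b a * c b)"
          proof (rule sum_pos2[OF fin(2) b(1)])
            show "0 < bary (V j) b a * c b" using b cpos by auto
            show "\<And>i. i \<in> Am \<Longrightarrow> 0 \<le> bary (V j) i a * c i"
              using F2[OF j] cpos by (meson UnCI less_imp_le mult_nonneg_nonneg)
          qed
          then show ?thesis using False dj unfolding cc_def by simp
        qed
      qed
      have sigq: "q j x = signomial (S j) Am cc x" for x
      proof -
        have "(\<Sum>a\<in>S j. \<delta> j * (\<Sum>b\<in>Am. bary (V j) b a * c b) * xpow x a) = (\<Sum>a\<in>S j. cc a * xpow x a)"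
          by (rule sum.cong) (use SA in \<open>auto simp: cc_def\<close>)
        moreover have "(\<Sum>b\<in>Am. \<delta> j * c b * xpow x b) = (\<Sum>b\<in>Am. cc b * xpow x b)"
          by (rule sum.cong) (auto simp: cc_def)
        ultimately show ?thesis unfolding q' signomial_def by simp
      qed
      have sig: "q j \<in> sig_set (S j) Am"
        unfolding sig_set_def using finS[OF j] fin(2) SA ccpos sigq by blast
      have Sne: "S j \<noteq> {}" using F1j Amne by auto
      have indS: "\<not> affine_dependent (S j)" using F1j Vk[OF j] affine_independent_subset by blast
      have hull: "convex hull (S j \<union> Am) = convex hull (S j)"
      proof
        show "convex hull (S j \<union> Am) \<subseteq> convex hull (S j)"
          by (rule hull_minimal) (use F1j hull_subset[of "S j" convex] in auto)
        show "convex hull (S j) \<subseteq> convex hull (S j \<union> Am)" by (rule hull_mono) blast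
      qed
      have cardS: "card (S j) \<ge> 1" using Sne finS[OF j] by (simp add: Suc_le_eq card_gt_0_iff)
      have smp: "(int (card (S j)) - 1) simplex (convex hull (S j))"
        by (rule simplex_convex_hull) (use indS in simp)
      have vS: "vertices (convex hull (S j)) = S j" unfolding vertices_def
        using extreme_point_of_convex_hull_affine_independent[OF indS] by auto
      have ext: "ext_circuit (S j) Am"
        unfolding ext_circuit_def hull using smp vS cardS
        by (intro disjI2 conjI exI[of _ "int (card (S j)) - 1"]) auto
      have e0: "(\<Sum>a\<in>S j. \<delta> j * (\<Sum>b\<in>Am. bary (V j) b a * c b)) - (\<Sum>b\<in>Am. \<delta> j * c b) = 0"
      proof -
        have "(\<Sum>a\<in>S j. \<delta> j * (\<Sum>b\<in>Am. bary (V j) b a * c b)) = (\<Sum>a\<in>S j. \<delta> j * (\<Sum>b\<in>Am. bary (V j) b a * c b) * 1)"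
          by simp
        also have "\<dots> = \<delta> j * (\<Sum>b\<in>Am. c b * (\<Sum>a\<in>S j. bary (V j) b a * 1))"
          by (rule dsum_real[OF finS[OF j] fin(2)])
        also have "\<dots> = \<delta> j * (\<Sum>b\<in>Am. c b)"
          using F2[OF j] by simp
        finally show ?thesis by (simp add: sum_distrib_left)
      qed
      have e1: "(\<Sum>a\<in>S j. (\<delta> j * (\<Sum>b\<in>Am. bary (V j) b a * c b)) *\<^sub>R a) - (\<Sum>b\<in>Am. (\<delta> j * c b) *\<^sub>R b) = 0"
      proof -
        have "(\<Sum>a\<in>S j. (\<delta> j * (\<Sum>b\<in>Am. bary (V j) b a * c b)) *\<^sub>R a)
            = \<delta> j *\<^sub>R (\<Sum>b\<in>Am. c b *\<^sub>R (\<Sum>a\<in>S j. bary (V j) b a *\<^sub>R a))"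
          by (rule dsum_vec[OF finS[OF j] fin(2)])
        also have "\<dots> = \<delta> j *\<^sub>R (\<Sum>b\<in>Am. c b *\<^sub>R b)"
          using F2[OF j] by simp
        also have "\<dots> = (\<Sum>b\<in>Am. (\<delta> j * c b) *\<^sub>R b)"
          by (simp add: scaleR_sum_right)
        finally show ?thesis by simp
      qed
      have sng: "(\<chi> i. 1) \<in> sing_pos (q j)"
        by (rule sing_crit[OF finS[OF j] fin(2) _ e0 e1]) (simp add: q')
      show "q j \<in> sig_set (S j) Am \<and> ext_circuit (S j) Am \<and> (\<chi> i. 1) \<in> sing_pos (q j)"
        using sig ext sng by blast
    qed
    have Jsub: "J \<subseteq> {1..r}" unfolding J_def by blast
    have qr: "f x = (\<Sum>k\<in>{1..r}. q k x)" if x: "x \<in> pos_orthant" for x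
    proof -
      have "f x = (\<Sum>a\<in>Ap. c a * xpow x a) - (\<Sum>b\<in>Am. c b * xpow x b)"
        using f x unfolding signomial_def by blast
      also have "\<dots> = (\<Sum>k\<in>{1..r}. \<delta> k * (\<Sum>b\<in>Am. c b * (\<Sum>a\<in>V k. bary (V k) b a * xpow x a)))
          - (\<Sum>k\<in>{1..r}. \<delta> k) * (\<Sum>b\<in>Am. c b * xpow x b)"
        using key[OF dZ, of "xpow x"] part1[OF dZ] by simp
      also have "\<dots> = (\<Sum>k\<in>{1..r}. \<delta> k * (\<Sum>b\<in>Am. c b * (\<Sum>a\<in>V k. bary (V k) b a * xpow x a))
          - \<delta> k * (\<Sum>b\<in>Am. c b * xpow x b))"
        by (simp add: sum_subtractf sum_distrib_right)
      also have "\<dots> = (\<Sum>k\<in>{1..r}. q k x)"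
        by (rule sum.cong[OF refl]) (simp add: qR right_diff_distrib sum_subtractf sum_distrib_left)
      finally show ?thesis .
    qed
    have rJ: "(\<Sum>k\<in>{1..r}. q k x) = (\<Sum>k\<in>J. q k x)" for x
    proof (rule sum.mono_neutral_right[symmetric, symmetric])
      show "finite {1..r}" by simp
      show "J \<subseteq> {1..r}" by (rule Jsub)
      show "\<forall>i\<in>{1..r} - J. q i x = 0"
      proof
        fix i assume i: "i \<in> {1..r} - J"
        then have "\<delta> i = 0" using dnn unfolding J_def by force
        then show "q i x = 0" using qR i by simp
      qed
    qed
    have B: "\<forall>x\<in>pos_orthant. f x = (\<Sum>j\<in>J. q j x)"
      using qr rJ by simp
    have C: "sonc f"
    proof -
      define I where "I = J \<times> Am"
      define Pp where "Pp p = {a\<in>V (fst p). 0 < bary (V (fst p)) (snd p) a}" for p :: "nat \<times> (real^'n)"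
      define g where "g p x = (\<delta> (fst p) * c (snd p)) *
          ((\<Sum>a\<in>Pp p. bary (V (fst p)) (snd p) a * xpow x a) - xpow x (snd p))"
        for p :: "nat \<times> (real^'n)" and x :: "real^'n"
      have finI: "finite I" unfolding I_def using Jsub fin(2) finite_subset[OF Jsub] by blast
      have piece: "circuit (Pp p) {snd p} \<and> g p \<in> sig_set (Pp p) {snd p} \<and> (\<forall>x\<in>pos_orthant. 0 \<le> g p x)
          \<and> (\<forall>x. (\<Sum>a\<in>V (fst p). bary (V (fst p)) (snd p) a * xpow x a) =
                 (\<Sum>a\<in>Pp p. bary (V (fst p)) (snd p) a * xpow x a))"
        if p: "p \<in> I" for p
      proof -
        obtain j b where pj: "p = (j, b)" and jJ: "j \<in> J" and b: "b \<in> Am" using p unfolding I_def by blast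
        have j: "j \<in> {1..r}" and dj: "0 < \<delta> j" using jJ unfolding J_def by auto
        have ind: "\<not> affine_dependent (V j)" using Vk[OF j] by blast
        have bh: "b \<in> convex hull (V j)" using Vk[OF j] b by blast
        have bV: "b \<notin> V j" using Vk[OF j] b disj by blast
        have w: "0 < \<delta> j * c b" using dj cpos b by simp
        note CP = circuit_piece[OF ind bh bV w]
        have gp: "g p = (\<lambda>x. (\<delta> j * c b) * ((\<Sum>a\<in>{a\<in>V j. 0 < bary (V j) b a}. bary (V j) b a * xpow x a) - xpow x b))"
          unfolding g_def Pp_def pj by simp
        have Ppj: "Pp p = {a\<in>V j. 0 < bary (V j) b a}" unfolding Pp_def pj by simp
        show ?thesis unfolding gp Ppj using CP(1-4) pj by simp
      qed
      have fsum: "f x = (\<Sum>p\<in>I. g p x)" if x: "x \<in> pos_orthant" for x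
      proof -
        have "f x = (\<Sum>j\<in>J. q j x)" using B x by blast
        also have "\<dots> = (\<Sum>j\<in>J. \<Sum>b\<in>Am. g (j, b) x)"
        proof (rule sum.cong[OF refl])
          fix j assume jJ: "j \<in> J"
          then have j: "j \<in> {1..r}" using Jsub by blast
          have "q j x = (\<Sum>b\<in>Am. (\<delta> j * c b) * ((\<Sum>a\<in>V j. bary (V j) b a * xpow x a) - xpow x b))"
            unfolding qR[OF j] by (simp add: sum_distrib_left mult.assoc)
          also have "\<dots> = (\<Sum>b\<in>Am. g (j, b) x)"
          proof (rule sum.cong[OF refl])
            fix b assume b: "b \<in> Am"
            have "(j, b) \<in> I" using jJ b unfolding I_def by blast
            then show "(\<delta> j * c b) * ((\<Sum>a\<in>V j. bary (V j) b a * xpow x a) - xpow x b) = g (j, b) x"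
              using piece unfolding g_def by fastforce
          qed
          finally show "q j x = (\<Sum>b\<in>Am. g (j, b) x)" .
        qed
        also have "\<dots> = (\<Sum>p\<in>I. g p x)"
          unfolding I_def using sum.cartesian_product[of "\<lambda>j b. g (j, b) x" Am J] by (simp add: case_prod_beta')
        finally show ?thesis .
      qed
      obtain h where h: "bij_betw h {0..<card I} I" using ex_bij_betw_nat_finite[OF finI] by blast
      have hI: "h i \<in> I" if "i < card I" for i using h that unfolding bij_betw_def by auto
      show "sonc f" unfolding sonc_def
      proof (intro exI conjI allI impI ballI)
        fix i assume i: "i < card I"
        show "circuit (Pp (h i)) {snd (h i)}" using piece[OF hI[OF i]] by blast
        show "g (h i) \<in> sig_set (Pp (h i)) {snd (h i)}" using piece[OF hI[OF i]] by blast
        fix x :: "real^'n" assume "x \<in> pos_orthant"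
        then show "0 \<le> g (h i) x" using piece[OF hI[OF i]] by blast
      next
        fix x :: "real^'n" assume x: "x \<in> pos_orthant"
        have "(\<Sum>i<card I. g (h i) x) = (\<Sum>p\<in>I. g p x)"
          using sum.reindex_bij_betw[OF h, of "\<lambda>p. g p x"] by (simp add: lessThan_atLeast0)
        then show "f x = (\<Sum>i<card I. g (h i) x)" using fsum[OF x] by simp
      qed
    qed
    show "let J = {j\<in>{1..r}. 0 < \<delta> j};
           \<Gamma> = (\<lambda>j. smallest_face (D j) Am);
           q = (\<lambda>j x. (\<Sum>a\<in>vertices (\<Gamma> j). \<delta> j * (\<Sum>b\<in>Am. bary (vertices (D j)) b a * c b) * xpow x a)
                      - (\<Sum>b\<in>Am. \<delta> j * c b * xpow x b))
       in (\<forall>j\<in>J. q j \<in> sig_set (vertices (\<Gamma> j)) Am \<and> ext_circuit (vertices (\<Gamma> j)) Am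
                  \<and> (\<chi> i. 1) \<in> sing_pos (q j))
          \<and> (\<forall>x\<in>pos_orthant. f x = (\<Sum>j\<in>J. q j x))
          \<and> sonc f"
      using A B C unfolding Let_def J_def \<Gamma>_def q_def S_def by blast
  qed
qed

end
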